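(* Consider optimization problem (P2) below, under the standing assumptions. Then every optimal solution $(\bar P_1^*,\bm u_1^*,\bar P_2^*,\bm u_2^* )$ of (P2) satisfies the incumbent rate constraint with equality: $$\mathbb{E}\big[\tilde R_1(\bar P_1^*,\bm u_1^*,\bar P_2^*,\bm u_2^* )\big]=\tau_1 .$$
   Context: Setting: two transmitters TX 1 (with $M_1$ antennas) and TX 2 (with $M_2$ antennas), and two single-antenna receivers RX 1, RX 2. For $i,j\in\{1,2\}$ the channel from TX $j$ to RX $i$ is $\bm h_{i,j}\sim\mathcal{CN}(\bm 0_{M_j},\mathbf R_{i,j})$, the four channel vectors being mutually independent, and each covariance $\mathbf R_{i,j}$ is Hermitian positive definite. For $i\in\{1,2\}$, $\bar i$ denotes the other index. The noise variance is $N_0>0$, the power budgets are $P_1^{\max}>0$, $P_2^{\max}>0$, and $\tau_1>0$ satisfies the feasibility condition $\mathbb{E}\big[\log_2\big(1+P_1^{\max}\|\bm h_{1,1}\|^2/N_0\big)\big]\ge\tau_1$. Problem (P2): the optimization variables are constants $\bar P_1\in[0,P_1^{\max}]$, $\bar P_2\in[0,P_2^{\max}]$ and beamformers $\bm u_1=\bm u_1(\bm h_{1,1})\in\mathbb C^{M_1}$, $\bm u_2=\bm u_2(\bm h_{2,2})\in\mathbb C^{M_2}$, where $\bm u_i$ is a measurable function of $\bm h_{i,i}$ only, with $\|\bm u_i\|=1$ almost surely. For $i\in\{1,2\}$ define $$\mathbb{E}\big[\tilde R_i(\bar P_1,\bm u_1,\bar P_2,\bm u_2)\big]=\mathbb{E}\left[\log_2\left(1+\frac{\bar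 P_i\,|\bm h_{i,i}^{H}\bm u_i|^2}{N_0+\bar P_{\bar i}\,\bm u_{\bar i}^{H}\mathbf R_{i,\bar i}\bm u_{\bar i}}\right)\right],$$ the expectation being over $\bm h_{1,1},\bm h_{2,2}$. Problem (P2) is: maximize $\mathbb{E}[\tilde R_2]$ subject to $\mathbb{E}[\tilde R_1]\ge\tau_1$, $0\le\bar P_1\le P_1^{\max}$, $0\le\bar P_2\le P_2^{\max}$, $\|\bm u_1\|=\|\bm u_2\|=1$. *)

theory Defs
  imports "HOL-Analysis.Analysis" "HOL-Probability.Probability"
begin

definition herm :: "complex^'m \<Rightarrow> complex^'m \<Rightarrow> complex" where
  "herm x y = (\<Sum>i\<in>UNIV. cnj (x$i) * y$i)"

definition qform :: "complex^'m^'m \<Rightarrow> complex^'m \<Rightarrow> complex" where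
  "qform R x = herm x (R *v x)"

definition hermitian :: "complex^'m^'m \<Rightarrow> bool" where
  "hermitian R \<longleftrightarrow> (\<forall>i j. R$i$j = cnj (R$j$i))"

definition herm_pos_def :: "complex^'m^'m \<Rightarrow> bool" where
  "herm_pos_def R \<longleftrightarrow> hermitian R \<and>
     (\<forall>x. x \<noteq> 0 \<longrightarrow> Im (qform R x) = 0 \<and> Re (qform R x) > 0)"

text \<open>Circularly-symmetric complex Gaussian CN(0,R) on C^M (identified with R^(2M) with
  Lebesgue measure), given by its density  exp(-h^H R^-1 h) / (pi^M det R).\<close>
definition CN :: "complex^'m^'m \<Rightarrow> (complex^'m) measure" where
  "CN R = density lborel
     (\<lambda>h. ennreal (exp (- Re (qform (matrix_inv R) h)) / (pi ^ CARD('m) * Re (det R))))"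

definition rate :: "real \<Rightarrow> real \<Rightarrow> complex^'n \<Rightarrow> complex^'n \<Rightarrow> real \<Rightarrow> complex^'k^'k \<Rightarrow> complex^'k \<Rightarrow> real" where
  "rate N0 P h u Pbar Rc ubar =
     log 2 (1 + P * (cmod (herm h u))\<^sup>2 / (N0 + Pbar * Re (qform Rc ubar)))"

definition ER1 :: "real \<Rightarrow> complex^'m1^'m1 \<Rightarrow> complex^'m2^'m2 \<Rightarrow> complex^'m2^'m2
    \<Rightarrow> real \<Rightarrow> (complex^'m1 \<Rightarrow> complex^'m1) \<Rightarrow> real \<Rightarrow> (complex^'m2 \<Rightarrow> complex^'m2) \<Rightarrow> ennreal" where
  "ER1 N0 R11 R22 R12 P1 u1 P2 u2 =
     (\<integral>\<^sup>+ hh. ennreal (rate N0 P1 (fst hh) (u1 (fst hh)) P2 R12 (u2 (snd hh)))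
        \<partial>(CN R11 \<Otimes>\<^sub>M CN R22))"

definition ER2 :: "real \<Rightarrow> complex^'m1^'m1 \<Rightarrow> complex^'m2^'m2 \<Rightarrow> complex^'m1^'m1
    \<Rightarrow> real \<Rightarrow> (complex^'m1 \<Rightarrow> complex^'m1) \<Rightarrow> real \<Rightarrow> (complex^'m2 \<Rightarrow> complex^'m2) \<Rightarrow> ennreal" where
  "ER2 N0 R11 R22 R21 P1 u1 P2 u2 =
     (\<integral>\<^sup>+ hh. ennreal (rate N0 P2 (snd hh) (u2 (snd hh)) P1 R21 (u1 (fst hh)))
        \<partial>(CN R11 \<Otimes>\<^sub>M CN R22))"

definition feasible_P2 where
  "feasible_P2 N0 R11 R22 R12 P1max P2max \<tau>1 P1 u1 P2 u2 \<longleftrightarrow>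
     0 \<le> P1 \<and> P1 \<le> P1max \<and> 0 \<le> P2 \<and> P2 \<le> P2max \<and>
     u1 \<in> borel_measurable borel \<and> u2 \<in> borel_measurable borel \<and>
     (AE h in CN R11. norm (u1 h) = 1) \<and> (AE h in CN R22. norm (u2 h) = 1) \<and>
     ER1 N0 R11 R22 R12 P1 u1 P2 u2 \<ge> ennreal \<tau>1"

definition optimal_P2 where
  "optimal_P2 N0 R11 R22 R12 R21 P1max P2max \<tau>1 P1 u1 P2 u2 \<longleftrightarrow>
     feasible_P2 N0 R11 R22 R12 P1max P2max \<tau>1 P1 u1 P2 u2 \<and>
     (\<forall>P1' u1' P2' u2'. feasible_P2 N0 R11 R22 R12 P1max P2max \<tau>1 P1' u1' P2' u2' \<longrightarrow>
        ER2 N0 R11 R22 R21 P1' u1' P2' u2' \<le> ER2 N0 R11 R22 R21 P1 u1 P2 u2)"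

end

theory Submission
  imports Defs
begin


lemma gauss_1d_fin:
  fixes \<mu> :: real assumes "\<mu> > 0"
  shows "(\<integral>\<^sup>+t. ennreal (exp (- \<mu> * t\<^sup>2)) \<partial>lborel) < \<infinity>"
proof -
  define \<sigma> where "\<sigma> = sqrt (1 / (2*\<mu>))"
  have s: "\<sigma> > 0" using assms by (simp add: \<sigma>_def)
  have s2: "2 * \<sigma>\<^sup>2 = 1/\<mu>" using assms by (simp add: \<sigma>_def)
  define c where "c = sqrt (2 * pi * \<sigma>\<^sup>2)"
  have c: "c > 0" using s by (simp add: c_def)
  have eq: "exp (- \<mu> * t\<^sup>2) = c * normal_density 0 \<sigma> t" for t
    using c s s2 assms by (simp add: normal_density_def c_def field_simps)
  have "(\<integral>\<^sup>+t. ennreal (exp (- \<mu> * t\<^sup>2)) \<partial>lborel) = (\<integral>\<^sup>+t. ennreal (c * normal_density 0 \<sigma> t) \<partial>lborel)"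
    by (simp only: eq)
  also have "\<dots> = (\<integral>\<^sup>+t. c * ennreal (normal_density 0 \<sigma> t) \<partial>lborel)"
    using c by (simp add: ennreal_mult)
  also have "\<dots> = c * (\<integral>\<^sup>+t. ennreal (normal_density 0 \<sigma> t) \<partial>lborel)"
    by (rule nn_integral_cmult) simp
  also have "(\<integral>\<^sup>+t. ennreal (normal_density 0 \<sigma> t) \<partial>lborel) = 1"
  proof -
    interpret prob_space "density lborel (normal_density 0 \<sigma>)" by (rule prob_space_normal_density) (rule s)
    show ?thesis using emeasure_space_1 by (simp add: emeasure_density)
  qed
  finally show ?thesis by simp
qed

lemma gauss_fin:
  fixes \<mu> :: real assumes "\<mu> > 0"
  shows "(\<integral>\<^sup>+x. ennreal (exp (- \<mu> * (norm (x::'a::euclidean_space))\<^sup>2)) \<partial>lborel) < \<infinity>"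
proof -
  have eq: "exp (- \<mu> * (norm x)\<^sup>2) = (\<Prod>b\<in>Basis. exp (- \<mu> * (x \<bullet> b)\<^sup>2))" for x :: 'a
  proof -
    have "(norm x)\<^sup>2 = x \<bullet> x" by (rule power2_norm_eq_inner)
    also have "\<dots> = (\<Sum>b\<in>Basis. (x \<bullet> b)\<^sup>2)" by (simp add: euclidean_inner[of x x] power2_eq_square)
    finally show ?thesis by (simp add: exp_sum[symmetric] sum_distrib_left sum_negf)
  qed
  have "(\<integral>\<^sup>+x. ennreal (exp (- \<mu> * (norm (x::'a))\<^sup>2)) \<partial>lborel)
      = (\<Prod>b\<in>(Basis::'a set). (\<integral>\<^sup>+t. exp (- \<mu> * t\<^sup>2) \<partial>lborel))"
  proof -
    have "(\<integral>\<^sup>+x. (\<Prod>b\<in>(Basis::'a set). ennreal (exp (- \<mu> * (x \<bullet> b)\<^sup>2))) \<partial>lborel)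
      = (\<Prod>b\<in>(Basis::'a set). (\<integral>\<^sup>+t. exp (- \<mu> * t\<^sup>2) \<partial>lborel))"
      by (rule nn_integral_lborel_prod) auto
    then show ?thesis unfolding eq by (simp add: prod_ennreal)
  qed
  also have "\<dots> < \<infinity>"
    using gauss_1d_fin[OF assms] by (simp add: power_less_top_ennreal)
  finally show ?thesis .
qed



lemma herm_swap:
  fixes R :: "complex^'m^'m"
  assumes "hermitian R"
  shows "herm (R *v y) y = herm y (R *v y)"
proof -
  have "herm (R *v y) y = (\<Sum>i\<in>UNIV. \<Sum>j\<in>UNIV. cnj (R$i$j) * cnj (y$j) * y$i)"
    by (simp add: herm_def matrix_vector_mult_def sum_distrib_right)
  also have "\<dots> = (\<Sum>i\<in>UNIV. \<Sum>j\<in>UNIV. R$j$i * cnj (y$j) * y$i)"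
  proof -
    have h: "cnj (R$i$j) = R$j$i" for i j
      using assms unfolding hermitian_def by (metis complex_cnj_cnj)
    show ?thesis by (simp only: h)
  qed
  also have "\<dots> = (\<Sum>j\<in>UNIV. \<Sum>i\<in>UNIV. R$j$i * cnj (y$j) * y$i)"
    by (rule sum.swap)
  also have "\<dots> = herm y (R *v y)"
    by (simp add: herm_def matrix_vector_mult_def sum_distrib_left mult_ac)
  finally show ?thesis .
qed

lemma hpd_inj:
  fixes R :: "complex^'m^'m"
  assumes "herm_pos_def R" "R *v x = 0"
  shows "x = 0"
proof (rule ccontr)
  assume "x \<noteq> 0"
  then have "Re (qform R x) > 0" using assms(1) by (simp add: herm_pos_def_def)
  moreover have "qform R x = 0" using assms(2) by (simp add: qform_def herm_def)
  ultimately show False by simp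
qed

lemma hpd_inv:
  fixes R :: "complex^'m^'m"
  assumes "herm_pos_def R"
  shows "R ** matrix_inv R = mat 1 \<and> matrix_inv R ** R = mat 1"
proof -
  have "\<exists>B. B ** R = mat 1" using hpd_inj[OF assms] by (simp add: matrix_left_invertible_ker)
  then have "invertible R" by (simp add: invertible_left_inverse)
  then show ?thesis unfolding matrix_inv_def invertible_def by (rule someI_ex)
qed

lemma qform_inv_pos:
  fixes R :: "complex^'m^'m"
  assumes "herm_pos_def R" "h \<noteq> 0"
  shows "Re (qform (matrix_inv R) h) > 0"
proof -
  define y where "y = matrix_inv R *v h"
  have hy: "h = R *v y" using hpd_inv[OF assms(1)]
    by (simp add: y_def matrix_vector_mul_assoc)
  have y0: "y \<noteq> 0" using assms(2) hy by auto
  have "matrix_inv R *v h = y" by (simp add: y_def)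
  then have "qform (matrix_inv R) h = herm (R *v y) y" by (simp add: qform_def hy)
  also have "\<dots> = qform R y" using assms(1) by (simp add: herm_pos_def_def qform_def herm_swap)
  finally show ?thesis using assms(1) y0 by (simp add: herm_pos_def_def)
qed

lemma mv_scale: "(M::complex^'m^'m) *v (c *\<^sub>R h) = c *\<^sub>R (M *v h)"
  unfolding vec_eq_iff matrix_vector_mult_def
  by (simp only: vec_lambda_beta vector_scaleR_component) (simp add: scaleR_conv_of_real sum_distrib_left mult.left_commute)

lemma qform_scale:
  "qform M (c *\<^sub>R h) = complex_of_real (c\<^sup>2) * qform M h"
proof -
  have "qform M (c *\<^sub>R h) = (\<Sum>i\<in>UNIV. complex_of_real (c\<^sup>2) * (cnj (h$i) * (M *v h)$i))"
    unfolding qform_def herm_def mv_scale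
    by (intro sum.cong refl) (simp only: vector_scaleR_component, simp add: scaleR_conv_of_real power2_eq_square)
  then show ?thesis by (simp add: qform_def herm_def sum_distrib_left)
qed

lemma qform_cont: "continuous_on UNIV (\<lambda>h. Re (qform M h))"
  unfolding qform_def herm_def matrix_vector_mult_def
  by (intro continuous_intros)

lemma qform_zero: "qform M 0 = 0"
  by (simp add: qform_def herm_def)

lemma quad_lower:
  fixes M :: "complex^'m^'m"
  assumes pos: "\<And>h. h \<noteq> 0 \<Longrightarrow> Re (qform M h) > 0"
  shows "\<exists>l>0. \<forall>h. Re (qform M h) \<ge> l * (norm h)\<^sup>2"
proof -
  have "compact (sphere (0::complex^'m) 1)" by simp
  moreover have "sphere (0::complex^'m) 1 \<noteq> {}" by simp
  moreover have "continuous_on (sphere 0 1) (\<lambda>h. Re (qform M h))"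
    using qform_cont continuous_on_subset by blast
  ultimately obtain x where x: "x \<in> sphere 0 1" and xm: "\<forall>y\<in>sphere 0 1. Re (qform M x) \<le> Re (qform M y)"
    using continuous_attains_inf by blast
  have x0: "x \<noteq> 0" using x by auto
  define l where "l = Re (qform M x)"
  have l: "l > 0" using pos[OF x0] by (simp add: l_def)
  have "Re (qform M h) \<ge> l * (norm h)\<^sup>2" for h
  proof (cases "h = 0")
    case True then show ?thesis by (simp add: qform_zero)
  next
    case False
    define u where "u = (1 / norm h) *\<^sub>R h"
    have u: "u \<in> sphere 0 1" using False by (simp add: u_def)
    have hu: "h = norm h *\<^sub>R u" using False by (simp add: u_def)
    have "Re (qform M h) = (norm h)\<^sup>2 * Re (qform M u)"
      by (subst hu, simp only: qform_scale) simp
    moreover have "l \<le> Re (qform M u)" using xm u by (simp add: l_def)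
    ultimately show ?thesis by (metis mult.commute mult_right_mono zero_le_power2)
  qed
  then show ?thesis using l by blast
qed



lemma CN_dens_meas: "(\<lambda>h. ennreal (exp (- Re (qform (matrix_inv R) h)) / D)) \<in> borel_measurable (lborel :: (complex^'m) measure)"
proof -
  have "continuous_on UNIV (\<lambda>h::complex^'m. exp (- Re (qform (matrix_inv R) h)))"
    by (rule continuous_on_exp[OF continuous_on_minus[OF qform_cont]])
  then have [measurable]: "(\<lambda>h::complex^'m. exp (- Re (qform (matrix_inv R) h))) \<in> borel_measurable borel"
    by (rule borel_measurable_continuous_onI)
  then show ?thesis by measurable
qed

lemma CN_fin:
  fixes R :: "complex^'m^'m"
  assumes R: "herm_pos_def R" and ab: "a \<ge> 0" "b \<ge> 0"
  shows "(\<integral>\<^sup>+h. ennreal (a + b * (norm h)\<^sup>2) \<partial>CN R) < \<infinity>"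
proof -
  obtain l where l: "l > 0" and lq: "\<And>h. Re (qform (matrix_inv R) h) \<ge> l * (norm h)\<^sup>2"
    using quad_lower[of "matrix_inv R"] qform_inv_pos[OF R] by blast
  define D where "D = pi ^ CARD('m) * Re (det R)"
  define K where "K = \<bar>1 / D\<bar> * (a + 2 * b / l)"
  have K: "K \<ge> 0" using ab l by (simp add: K_def)
  have pt: "ennreal (exp (- Re (qform (matrix_inv R) h)) / D) * ennreal (a + b * (norm h)\<^sup>2)
      \<le> ennreal (K * exp (- (l/2) * (norm h)\<^sup>2))" for h :: "complex^'m"
  proof (cases "exp (- Re (qform (matrix_inv R) h)) / D > 0")
    case False
    then have "ennreal (exp (- Re (qform (matrix_inv R) h)) / D) = 0" by (simp add: ennreal_eq_0_iff)
    then show ?thesis by simp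
  next
    case True
    define s where "s = (norm h)\<^sup>2"
    have s: "s \<ge> 0" by (simp add: s_def)
    have e1: "exp (- Re (qform (matrix_inv R) h)) \<le> exp (- l * s)"
      using lq[of h] by (simp add: s_def)
    have D: "D > 0" using True by (simp add: zero_less_divide_iff)
    have e2: "exp (- Re (qform (matrix_inv R) h)) / D \<le> \<bar>1/D\<bar> * exp (- l * s)"
      using e1 D by (simp add: divide_right_mono)
    have "1 + l * s / 2 \<le> exp (l * s / 2)" by (rule exp_ge_add_one_self)
    then have "b * s \<le> (2 * b / l) * exp (l * s / 2)"
      using l ab s by (simp add: field_simps) (smt (verit) mult_left_mono)
    moreover have "a \<le> a * exp (l * s / 2)"
    proof -
      have "1 \<le> exp (l * s / 2)" using l s by simp
      then show ?thesis using ab mult_left_mono[of 1 _ a] by simp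
    qed
    ultimately have e3: "a + b * s \<le> (a + 2 * b / l) * exp (l * s / 2)"
      by (simp add: algebra_simps)
    have "exp (- Re (qform (matrix_inv R) h)) / D * (a + b * s)
        \<le> (\<bar>1/D\<bar> * exp (- l * s)) * ((a + 2 * b / l) * exp (l * s / 2))"
      using e2 e3 ab s True by (intro mult_mono) auto
    also have "\<dots> = K * exp (- (l/2) * s)"
    proof -
      have ee: "exp (- (l * s)) * exp (l * s / 2) = exp (- (l * s / 2))"
        by (simp add: exp_add[symmetric])
      show ?thesis by (simp add: K_def algebra_simps ee)
    qed
    finally have fin: "exp (- Re (qform (matrix_inv R) h)) / D * (a + b * s) \<le> K * exp (- (l/2) * s)" .
    have "ennreal (exp (- Re (qform (matrix_inv R) h)) / D) * ennreal (a + b * s)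
       = ennreal (exp (- Re (qform (matrix_inv R) h)) / D * (a + b * s))"
      using True ab s by (intro ennreal_mult[symmetric]) auto
    also have "\<dots> \<le> ennreal (K * exp (- (l/2) * s))" using fin by (rule ennreal_leI)
    finally show ?thesis by (simp only: s_def)
  qed
  have "(\<integral>\<^sup>+h. ennreal (a + b * (norm h)\<^sup>2) \<partial>CN R)
     = (\<integral>\<^sup>+h. ennreal (exp (- Re (qform (matrix_inv R) h)) / D) * ennreal (a + b * (norm h)\<^sup>2) \<partial>lborel)"
    unfolding CN_def D_def by (rule nn_integral_density) (rule CN_dens_meas, measurable)
  also have "\<dots> \<le> (\<integral>\<^sup>+h. ennreal (K * exp (- (l/2) * (norm (h::complex^'m))\<^sup>2)) \<partial>lborel)"
    using pt by (intro nn_integral_mono) blast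
  also have "\<dots> = K * (\<integral>\<^sup>+h. ennreal (exp (- (l/2) * (norm (h::complex^'m))\<^sup>2)) \<partial>lborel)"
    using K by (simp add: ennreal_mult nn_integral_cmult)
  also have "\<dots> < \<infinity>"
    using gauss_fin[of "l/2", where 'a="complex^'m"] l by (simp add: ennreal_mult_less_top)
  finally show ?thesis .
qed



lemma CN_dens_meas_b: "(\<lambda>h. ennreal (exp (- Re (qform (matrix_inv R) h)) / D)) \<in> borel_measurable (borel :: (complex^'m) measure)"
proof -
  have "continuous_on UNIV (\<lambda>h::complex^'m. exp (- Re (qform (matrix_inv R) h)))"
    by (rule continuous_on_exp[OF continuous_on_minus[OF qform_cont]])
  then have [measurable]: "(\<lambda>h::complex^'m. exp (- Re (qform (matrix_inv R) h))) \<in> borel_measurable borel"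
    by (rule borel_measurable_continuous_onI)
  then show ?thesis by measurable
qed

lemma qform_nonneg: "herm_pos_def R \<Longrightarrow> Re (qform R v) \<ge> 0"
  by (cases "v = 0") (auto simp: herm_pos_def_def qform_zero intro: less_imp_le)

lemma qform_pos_unit: "herm_pos_def R \<Longrightarrow> norm v = 1 \<Longrightarrow> Re (qform R v) > 0"
  by (cases "v = 0") (auto simp: herm_pos_def_def)

lemma sets_CN[measurable_cong]: "sets (CN R) = sets borel"
  by (simp add: CN_def)

lemma space_CN[simp]: "space (CN R) = UNIV"
  by (simp add: CN_def)

lemma sf_CN: "sigma_finite_measure (CN R)"
  unfolding CN_def
  by (subst sigma_finite_measure.sigma_finite_iff_density_finite[OF sigma_finite_lborel]) (auto intro: CN_dens_meas CN_dens_meas_b)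

lemma CN_nonzero: "AE h in CN R. h \<noteq> 0"
proof -
  have "AE h in (lborel::(complex^'a) measure). h \<noteq> 0"
    by (rule AE_I[of _ _ "{0}"]) (auto simp: emeasure_lborel_countable)
  then show ?thesis unfolding CN_def
    by (subst AE_density) (auto intro: CN_dens_meas CN_dens_meas_b)
qed

lemma herm_cs: "cmod (herm h u) \<le> norm h * norm u"
proof -
  have "cmod (herm h u) \<le> (\<Sum>i\<in>UNIV. cmod (h$i) * cmod (u$i))"
    unfolding herm_def by (rule order_trans[OF norm_sum]) (simp add: norm_mult)
  also have "\<dots> = (\<Sum>i\<in>UNIV. \<bar>cmod (h$i)\<bar> * \<bar>cmod (u$i)\<bar>)" by simp
  also have "\<dots> \<le> L2_set (\<lambda>i. cmod (h$i)) UNIV * L2_set (\<lambda>i. cmod (u$i)) UNIV"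
    by (rule L2_set_mult_ineq)
  also have "\<dots> = norm h * norm u" by (simp add: norm_vec_def)
  finally show ?thesis .
qed

lemma herm_self: "herm h h = of_real ((norm h)\<^sup>2)"
proof -
  have "(norm h)\<^sup>2 = (\<Sum>i\<in>UNIV. (cmod (h$i))\<^sup>2)"
    by (simp add: norm_vec_def L2_set_def sum_nonneg)
  moreover have "cnj (h$i) * h$i = of_real ((cmod (h$i))\<^sup>2)" for i
    by (metis complex_norm_square mult.commute)
  ultimately show ?thesis unfolding herm_def by (simp only: of_real_sum)
qed

lemma herm_cont: "continuous_on UNIV (\<lambda>x::(complex^'n)\<times>(complex^'n). herm (fst x) (snd x))"
  unfolding herm_def by (intro continuous_intros)

lemma herm_meas[measurable (raw)]:
  "f \<in> borel_measurable M \<Longrightarrow> g \<in> borel_measurable M \<Longrightarrow> (\<lambda>x. herm (f x) (g x)) \<in> borel_measurable M"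
  by (rule borel_measurable_continuous_Pair[OF _ _ herm_cont])

lemma qform_meas[measurable (raw)]:
  "f \<in> borel_measurable M \<Longrightarrow> (\<lambda>x. Re (qform R (f x))) \<in> borel_measurable M"
  using measurable_compose[OF _ borel_measurable_continuous_onI[OF qform_cont]] by blast

lemma log_bound: "0 \<le> x \<Longrightarrow> log 2 (1 + x) \<le> 2 * x"
proof -
  assume x: "0 \<le> x"
  have "ln (1 + x) \<le> x" using x by (rule ln_add_one_self_le_self)
  moreover have "2/3 \<le> ln (2::real)" by (rule ln2_ge_two_thirds)
  ultimately have "x \<le> 2 * x * ln 2" using x mult_left_mono[of 1 "2 * ln 2" x] by simp
  with \<open>ln (1 + x) \<le> x\<close> show ?thesis
    by (simp add: log_def divide_le_eq)
qed

lemma AE_fst_CN: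
  assumes [measurable]: "Measurable.pred borel P" and "AE x in CN R1. P x"
  shows "AE z in CN R1 \<Otimes>\<^sub>M CN R2. P (fst z)"
proof -
  interpret pair_sigma_finite "CN R1" "CN R2"
    by (intro pair_sigma_finite.intro sf_CN)
  show ?thesis
  proof (rule AE_pair_measure)
    show "AE x in CN R1. AE y in CN R2. P (fst (x, y))"
      using assms(2) by (rule AE_mp) (rule AE_I2, rule impI, rule AE_I2, simp)
  qed simp
qed

lemma AE_snd_CN:
  assumes [measurable]: "Measurable.pred borel P" and "AE x in CN R2. P x"
  shows "AE z in CN R1 \<Otimes>\<^sub>M CN R2. P (snd z)"
proof -
  interpret pair_sigma_finite "CN R1" "CN R2"
    by (intro pair_sigma_finite.intro sf_CN)
  show ?thesis
  proof (rule AE_pair_measure)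
    show "AE x in CN R1. AE y in CN R2. P (snd (x, y))"
      by (rule AE_I2) (simp add: assms(2))
  qed simp
qed



lemma L_mono:
  assumes "0 \<le> n" "n \<le> n'" "0 < d'" "d' \<le> d"
  shows "log 2 (1 + n / d) \<le> log 2 (1 + n' / d')"
proof -
  have "n / d \<le> n' / d'" using assms by (meson divide_mono order.trans order.refl frac_le)
  moreover have "0 \<le> n / d" using assms by simp
  ultimately show ?thesis by simp
qed

lemma L_strict:
  assumes "0 < n" "0 < d'" "d' < d"
  shows "log 2 (1 + n / d) < log 2 (1 + n / d')"
proof -
  have "n / d < n / d'" using assms by (simp add: divide_strict_left_mono)
  moreover have "0 \<le> n / d" using assms by simp
  ultimately show ?thesis by simp
qed

lemma L_pos:
  assumes "0 < n" "0 < d"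
  shows "0 < log 2 (1 + n / d)"
proof -
  have "0 < n / d" using assms by simp
  then show ?thesis by (subst zero_less_log_cancel_iff) auto
qed

lemma mono_conv_exists:
  fixes g :: "nat \<Rightarrow> 'a \<Rightarrow> real"
  assumes meas: "\<And>n. (\<lambda>x. ennreal (g n x)) \<in> borel_measurable M"
    and inc: "\<And>x n. g n x \<le> g (Suc n) x"
    and lim: "\<And>x. (\<lambda>n. g n x) \<longlonglongrightarrow> g' x"
    and big: "c < (\<integral>\<^sup>+x. ennreal (g' x) \<partial>M)"
  shows "\<exists>n. c < (\<integral>\<^sup>+x. ennreal (g n x) \<partial>M)"
proof -
  have incx: "incseq (\<lambda>n. ennreal (g n x))" for x
    using inc by (intro incseq_SucI) (simp add: ennreal_leI)
  have sup: "ennreal (g' x) = (SUP n. ennreal (g n x))" for x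
    using LIMSEQ_SUP[OF incx[of x]] lim[of x] by (intro LIMSEQ_unique) auto
  have "(\<integral>\<^sup>+x. ennreal (g' x) \<partial>M) = (\<integral>\<^sup>+x. (SUP n. ennreal (g n x)) \<partial>M)"
    by (simp add: sup)
  also have "\<dots> = (SUP n. (\<integral>\<^sup>+x. ennreal (g n x) \<partial>M))"
    by (rule nn_integral_monotone_convergence_SUP) (auto simp: incseq_def le_fun_def meas dest: incx[THEN incseqD])
  finally show ?thesis using big by (simp add: less_SUP_iff)
qed

lemma CN_finite: "herm_pos_def R \<Longrightarrow> emeasure (CN R) UNIV < \<infinity>"
  using CN_fin[of R 1 0] by simp

lemma rate_int_fin:
  fixes R1 :: "complex^'m1^'m1" and R2 :: "complex^'m2^'m2" and Rc :: "complex^'k^'k"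
  assumes R1: "herm_pos_def R1" and R2: "herm_pos_def R2" and Rc: "herm_pos_def Rc"
    and N0: "N0 > 0" and P: "P \<ge> 0" and Pb: "Pb \<ge> 0"
    and [measurable]: "u \<in> borel_measurable borel" "v \<in> borel_measurable borel"
    and un: "AE h in CN R2. norm (u h) = 1"
  shows "(\<integral>\<^sup>+z. ennreal (rate N0 P (snd z) (u (snd z)) Pb Rc (v (fst z))) \<partial>(CN R1 \<Otimes>\<^sub>M CN R2)) < \<infinity>"
proof -
  interpret S2: sigma_finite_measure "CN R2" by (rule sf_CN)
  define C where "C = 2 * P / N0"
  have C: "C \<ge> 0" using P N0 by (simp add: C_def)
  have ae: "AE z in CN R1 \<Otimes>\<^sub>M CN R2. norm (u (snd z)) = 1"
    by (rule AE_snd_CN) (auto simp: un)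
  have "(\<integral>\<^sup>+z. ennreal (rate N0 P (snd z) (u (snd z)) Pb Rc (v (fst z))) \<partial>(CN R1 \<Otimes>\<^sub>M CN R2))
      \<le> (\<integral>\<^sup>+z. ennreal (0 + C * (norm (snd z))\<^sup>2) \<partial>(CN R1 \<Otimes>\<^sub>M CN R2))"
  proof (rule nn_integral_mono_AE)
    show "AE z in CN R1 \<Otimes>\<^sub>M CN R2. ennreal (rate N0 P (snd z) (u (snd z)) Pb Rc (v (fst z)))
        \<le> ennreal (0 + C * (norm (snd z))\<^sup>2)"
      using ae
    proof eventually_elim
      case (elim z)
      define h where "h = snd z"
      have q: "Re (qform Rc (v (fst z))) \<ge> 0" using Rc by (rule qform_nonneg)
      have den: "N0 \<le> N0 + Pb * Re (qform Rc (v (fst z)))" using q Pb by simp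
      have cs: "cmod (herm h (u h)) \<le> norm h" using herm_cs[of h "u h"] elim by (simp add: h_def)
      have cs2: "(cmod (herm h (u h)))\<^sup>2 \<le> (norm h)\<^sup>2" using cs by (simp add: power_mono)
      define x where "x = P * (cmod (herm h (u h)))\<^sup>2 / (N0 + Pb * Re (qform Rc (v (fst z))))"
      have x0: "0 \<le> x" unfolding x_def using P N0 den by simp
      have "x \<le> P * (norm h)\<^sup>2 / N0" unfolding x_def
        using P N0 den cs2 by (intro frac_le mult_left_mono) auto
      then have "log 2 (1 + x) \<le> C * (norm h)\<^sup>2"
        using log_bound[OF x0] by (simp add: C_def)
      then show ?case unfolding rate_def x_def h_def by (intro ennreal_leI) simp
    qed
  qed
  also have "\<dots> = (\<integral>\<^sup>+x. (\<integral>\<^sup>+y. ennreal (0 + C * (norm y)\<^sup>2) \<partial>CN R2) \<partial>CN R1)"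
    by (subst S2.nn_integral_fst[symmetric]) auto
  also have "\<dots> = (\<integral>\<^sup>+y. ennreal (0 + C * (norm y)\<^sup>2) \<partial>CN R2) * emeasure (CN R1) UNIV"
    by simp
  also have "\<dots> < \<infinity>"
    using CN_fin[OF R2, of 0 C] C CN_finite[OF R1] by (simp add: ennreal_mult_less_top)
  finally show ?thesis .
qed



lemma rate_meas[measurable (raw)]:
  assumes [measurable]: "f \<in> borel_measurable M" "g \<in> borel_measurable M" "w \<in> borel_measurable M"
  shows "(\<lambda>x. rate N0 P (f x) (g x) Pb Rc (w x)) \<in> borel_measurable M"
  unfolding rate_def by measurable

lemma herm_scale: "herm h (c *\<^sub>R v) = of_real c * herm h v"
  unfolding herm_def by (simp only: vector_scaleR_component) (simp add: sum_distrib_left scaleR_conv_of_real mult_ac)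

lemma cmod_herm_unit:
  assumes "h \<noteq> 0"
  shows "cmod (herm h ((1 / norm h) *\<^sub>R h)) = norm h"
  using assms by (simp add: herm_scale herm_self norm_mult power2_eq_square)



theorem proposition1:
  fixes R11 R21 :: "complex^'m1^'m1" and R22 R12 :: "complex^'m2^'m2"
    and N0 P1max P2max \<tau>1 :: real
    and P1 P2 :: real and u1 :: "complex^'m1 \<Rightarrow> complex^'m1" and u2 :: "complex^'m2 \<Rightarrow> complex^'m2"
  assumes "herm_pos_def R11" "herm_pos_def R12" "herm_pos_def R21" "herm_pos_def R22"
    and "N0 > 0" "P1max > 0" "P2max > 0" "\<tau>1 > 0"
    and "(\<integral>\<^sup>+ h. ennreal (log 2 (1 + P1max * (norm h)\<^sup>2 / N0)) \<partial>CN R11) \<ge> ennreal \<tau>1"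
    and "optimal_P2 N0 R11 R22 R12 R21 P1max P2max \<tau>1 P1 u1 P2 u2"
  shows "ER1 N0 R11 R22 R12 P1 u1 P2 u2 = ennreal \<tau>1"
proof (rule ccontr)
  assume ne: "ER1 N0 R11 R22 R12 P1 u1 P2 u2 \<noteq> ennreal \<tau>1"
  note R11 = assms(1) and R12 = assms(2) and R21 = assms(3) and R22 = assms(4)
  have N0: "N0 > 0" and P2max: "P2max > 0" and tau: "\<tau>1 > 0" using assms by auto
  have feas: "feasible_P2 N0 R11 R22 R12 P1max P2max \<tau>1 P1 u1 P2 u2"
    and optall: "\<And>P1' u1' P2' u2'. feasible_P2 N0 R11 R22 R12 P1max P2max \<tau>1 P1' u1' P2' u2' \<Longrightarrow>
        ER2 N0 R11 R22 R21 P1' u1' P2' u2' \<le> ER2 N0 R11 R22 R21 P1 u1 P2 u2"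
    using assms(10) unfolding optimal_P2_def by auto
  have P1: "0 \<le> P1" "P1 \<le> P1max" and P2: "0 \<le> P2" "P2 \<le> P2max"
    and [measurable]: "u1 \<in> borel_measurable borel" "u2 \<in> borel_measurable borel"
    and ae1: "AE h in CN R11. norm (u1 h) = 1" and ae2: "AE h in CN R22. norm (u2 h) = 1"
    and ge: "ER1 N0 R11 R22 R12 P1 u1 P2 u2 \<ge> ennreal \<tau>1"
    using feas unfolding feasible_P2_def by auto
  have gt: "ennreal \<tau>1 < ER1 N0 R11 R22 R12 P1 u1 P2 u2" using ge ne by simp
  show False
  proof (cases "ER2 N0 R11 R22 R21 P1 u1 P2 u2 = 0")
    case False
    note ER2ne = False
    have P1pos: "P1 > 0"
    proof (rule ccontr)
      assume "\<not> P1 > 0"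
      then have "P1 = 0" using P1 by simp
      then have "ER1 N0 R11 R22 R12 P1 u1 P2 u2 = 0" unfolding ER1_def rate_def by simp
      then show False using gt by simp
    qed
    define P1n where "P1n n = P1 - P1 / real (Suc (Suc n))" for n
    have P1n_nn: "0 \<le> P1n n" for n using P1pos by (simp add: P1n_def divide_le_eq)
    have P1n_lt: "P1n n < P1" for n using P1pos by (simp add: P1n_def)
    have P1n_inc: "P1n n \<le> P1n (Suc n)" for n using P1pos
      by (simp add: P1n_def divide_left_mono)
    have P1n_lim: "P1n \<longlonglongrightarrow> P1"
      unfolding P1n_def using tendsto_diff[OF tendsto_const[of P1] LIMSEQ_Suc[OF LIMSEQ_Suc[OF lim_const_over_n[of P1]]]] by simp
    define g where "g n z = rate N0 (P1n n) (fst z) (u1 (fst z)) P2 R12 (u2 (snd z))"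
      for n and z :: "(complex^'m1) \<times> (complex^'m2)"
    have "\<exists>n. ennreal \<tau>1 < (\<integral>\<^sup>+z. ennreal (g n z) \<partial>(CN R11 \<Otimes>\<^sub>M CN R22))"
    proof (rule mono_conv_exists)
      show "(\<lambda>z. ennreal (g n z)) \<in> borel_measurable (CN R11 \<Otimes>\<^sub>M CN R22)" for n
        unfolding g_def by measurable
      show "g n z \<le> g (Suc n) z" for n z
      proof -
        have q: "Re (qform R12 (u2 (snd z))) \<ge> 0" using R12 by (rule qform_nonneg)
        show ?thesis unfolding g_def rate_def
          using q P2 N0 P1n_nn[of n] P1n_inc[of n]
          by (intro L_mono) (auto intro!: mult_right_mono add_pos_nonneg)
      qed
      show "(\<lambda>n. g n z) \<longlonglongrightarrow> rate N0 P1 (fst z) (u1 (fst z)) P2 R12 (u2 (snd z))" for z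
      proof -
        have q: "Re (qform R12 (u2 (snd z))) \<ge> 0" using R12 by (rule qform_nonneg)
        then have d: "0 < N0 + P2 * Re (qform R12 (u2 (snd z)))" using N0 P2 by (simp add: add_pos_nonneg)
        have "0 \<le> P1 * (cmod (herm (fst z) (u1 (fst z))))\<^sup>2 / (N0 + P2 * Re (qform R12 (u2 (snd z))))"
          using P1 d by simp
        then show ?thesis unfolding g_def rate_def
          using d by (intro tendsto_intros P1n_lim) auto
      qed
      show "ennreal \<tau>1 < (\<integral>\<^sup>+z. ennreal (rate N0 P1 (fst z) (u1 (fst z)) P2 R12 (u2 (snd z))) \<partial>(CN R11 \<Otimes>\<^sub>M CN R22))"
        using gt unfolding ER1_def .
    qed
    then obtain n where n: "ennreal \<tau>1 < (\<integral>\<^sup>+z. ennreal (g n z) \<partial>(CN R11 \<Otimes>\<^sub>M CN R22))" by blast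
    have fn: "feasible_P2 N0 R11 R22 R12 P1max P2max \<tau>1 (P1n n) u1 P2 u2"
      unfolding feasible_P2_def ER1_def using P1n_nn[of n] P1n_lt[of n] P1 P2 ae1 ae2 n
      by (auto simp: g_def less_imp_le)
    have le: "ER2 N0 R11 R22 R21 (P1n n) u1 P2 u2 \<le> ER2 N0 R11 R22 R21 P1 u1 P2 u2"
      by (rule optall[OF fn])
    have "ER2 N0 R11 R22 R21 P1 u1 P2 u2 < ER2 N0 R11 R22 R21 (P1n n) u1 P2 u2"
      unfolding ER2_def
    proof (rule nn_integral_less)
      show "(\<integral>\<^sup>+z. ennreal (rate N0 P2 (snd z) (u2 (snd z)) P1 R21 (u1 (fst z))) \<partial>(CN R11 \<Otimes>\<^sub>M CN R22)) \<noteq> \<infinity>"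
        using rate_int_fin[OF R11 R22 R21 N0 P2(1) P1(1), of u2 u1] ae2 by simp
      show "AE z in CN R11 \<Otimes>\<^sub>M CN R22. ennreal (rate N0 P2 (snd z) (u2 (snd z)) P1 R21 (u1 (fst z)))
          \<le> ennreal (rate N0 P2 (snd z) (u2 (snd z)) (P1n n) R21 (u1 (fst z)))"
      proof (rule AE_I2, rule ennreal_leI)
        fix z :: "(complex^'m1) \<times> (complex^'m2)"
        have q: "Re (qform R21 (u1 (fst z))) \<ge> 0" using R21 by (rule qform_nonneg)
        show "rate N0 P2 (snd z) (u2 (snd z)) P1 R21 (u1 (fst z)) \<le> rate N0 P2 (snd z) (u2 (snd z)) (P1n n) R21 (u1 (fst z))"
          unfolding rate_def using q P2 N0 P1n_nn[of n] P1n_lt[of n]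
          by (intro L_mono) (auto intro!: mult_right_mono add_pos_nonneg)
      qed
      show "\<not> (AE z in CN R11 \<Otimes>\<^sub>M CN R22. ennreal (rate N0 P2 (snd z) (u2 (snd z)) (P1n n) R21 (u1 (fst z)))
          \<le> ennreal (rate N0 P2 (snd z) (u2 (snd z)) P1 R21 (u1 (fst z))))"
      proof
        assume A: "AE z in CN R11 \<Otimes>\<^sub>M CN R22. ennreal (rate N0 P2 (snd z) (u2 (snd z)) (P1n n) R21 (u1 (fst z)))
          \<le> ennreal (rate N0 P2 (snd z) (u2 (snd z)) P1 R21 (u1 (fst z)))"
        moreover have "AE z in CN R11 \<Otimes>\<^sub>M CN R22. norm (u1 (fst z)) = 1"
          by (rule AE_fst_CN) (auto simp: ae1)
        ultimately have "AE z in CN R11 \<Otimes>\<^sub>M CN R22. ennreal (rate N0 P2 (snd z) (u2 (snd z)) P1 R21 (u1 (fst z))) = 0"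
        proof eventually_elim
          case (elim z)
          have q: "Re (qform R21 (u1 (fst z))) > 0" using R21 elim(2) by (rule qform_pos_unit)
          define a where "a = P2 * (cmod (herm (snd z) (u2 (snd z))))\<^sup>2"
          have a0: "0 \<le> a" using P2 by (simp add: a_def)
          have dlt: "N0 + P1n n * Re (qform R21 (u1 (fst z))) < N0 + P1 * Re (qform R21 (u1 (fst z)))"
            using q P1n_lt[of n] by simp
          have dpos: "0 < N0 + P1n n * Re (qform R21 (u1 (fst z)))"
            using N0 q P1n_nn[of n] by (simp add: add_pos_nonneg)
          show ?case
          proof (cases "a > 0")
            case True
            have "log 2 (1 + a / (N0 + P1 * Re (qform R21 (u1 (fst z)))))
                < log 2 (1 + a / (N0 + P1n n * Re (qform R21 (u1 (fst z)))))"
              using True dpos dlt by (rule L_strict)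
            moreover have "0 \<le> log 2 (1 + a / (N0 + P1 * Re (qform R21 (u1 (fst z)))))"
              using a0 N0 q P1 by (simp add: add_pos_nonneg)
            ultimately have False using elim(1) unfolding rate_def a_def
              by (auto simp: ennreal_le_iff2)
            then show ?thesis ..
          next
            case False
            then have "a = 0" using a0 by simp
            then show ?thesis unfolding rate_def a_def[symmetric] by simp
          qed
        qed
        then have "ER2 N0 R11 R22 R21 P1 u1 P2 u2 = 0"
          unfolding ER2_def by (intro nn_integral_0_iff_AE[THEN iffD2]) auto
        then show False using ER2ne by simp
      qed
    qed (measurable)
    then show False using le by simp
  next
    case True
    define u2' where "u2' = (\<lambda>h::complex^'m2. (1 / norm h) *\<^sub>R h)"
    have [measurable]: "u2' \<in> borel_measurable borel" unfolding u2'_def by measurable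
    have ae2': "AE h in CN R22. norm (u2' h) = 1"
      using CN_nonzero[of R22] by eventually_elim (simp add: u2'_def)
    define P2n where "P2n n = P2max / real (Suc (Suc n))" for n
    have P2n_pos: "0 < P2n n" for n using P2max by (simp add: P2n_def)
    have P2n_le: "P2n n \<le> P2max" for n using P2max by (simp add: P2n_def divide_le_eq)
    have P2n_dec: "P2n (Suc n) \<le> P2n n" for n using P2max
      by (simp add: P2n_def divide_left_mono)
    have P2n_lim: "P2n \<longlonglongrightarrow> 0"
      unfolding P2n_def using LIMSEQ_Suc[OF LIMSEQ_Suc[OF lim_const_over_n[of P2max]]] by simp
    define g where "g n z = rate N0 P1 (fst z) (u1 (fst z)) (P2n n) R12 (u2' (snd z))"
      for n and z :: "(complex^'m1) \<times> (complex^'m2)"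
    define g' where "g' z = rate N0 P1 (fst z) (u1 (fst z)) 0 R12 (u2' (snd z))"
      for z :: "(complex^'m1) \<times> (complex^'m2)"
    have "\<exists>n. ennreal \<tau>1 < (\<integral>\<^sup>+z. ennreal (g n z) \<partial>(CN R11 \<Otimes>\<^sub>M CN R22))"
    proof (rule mono_conv_exists)
      show "(\<lambda>z. ennreal (g n z)) \<in> borel_measurable (CN R11 \<Otimes>\<^sub>M CN R22)" for n
        unfolding g_def by measurable
      show "g n z \<le> g (Suc n) z" for n z
      proof -
        have q: "Re (qform R12 (u2' (snd z))) \<ge> 0" using R12 by (rule qform_nonneg)
        show ?thesis unfolding g_def rate_def
          using q P1 N0 P2n_pos[of "Suc n"] P2n_dec[of n]
          by (intro L_mono) (auto intro!: mult_right_mono add_pos_nonneg)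
      qed
      show "(\<lambda>n. g n z) \<longlonglongrightarrow> g' z" for z
      proof -
        have q: "Re (qform R12 (u2' (snd z))) \<ge> 0" using R12 by (rule qform_nonneg)
        have "0 \<le> P1 * (cmod (herm (fst z) (u1 (fst z))))\<^sup>2 / N0" using P1 N0 by simp
        then show ?thesis unfolding g_def g'_def rate_def
          using N0 by (intro tendsto_intros P2n_lim) (auto simp: add_pos_nonneg)
      qed
      show "ennreal \<tau>1 < (\<integral>\<^sup>+z. ennreal (g' z) \<partial>(CN R11 \<Otimes>\<^sub>M CN R22))"
      proof -
        have "ER1 N0 R11 R22 R12 P1 u1 P2 u2 \<le> (\<integral>\<^sup>+z. ennreal (g' z) \<partial>(CN R11 \<Otimes>\<^sub>M CN R22))"
          unfolding ER1_def
        proof (intro nn_integral_mono ennreal_leI)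
          fix z :: "(complex^'m1) \<times> (complex^'m2)"
          have q: "Re (qform R12 (u2 (snd z))) \<ge> 0" using R12 by (rule qform_nonneg)
          show "rate N0 P1 (fst z) (u1 (fst z)) P2 R12 (u2 (snd z)) \<le> g' z"
            unfolding g'_def rate_def using q P1 P2 N0 by (intro L_mono) auto
        qed
        then show ?thesis using gt by simp
      qed
    qed
    then obtain n where n: "ennreal \<tau>1 < (\<integral>\<^sup>+z. ennreal (g n z) \<partial>(CN R11 \<Otimes>\<^sub>M CN R22))" by blast
    have fn: "feasible_P2 N0 R11 R22 R12 P1max P2max \<tau>1 P1 u1 (P2n n) u2'"
      unfolding feasible_P2_def ER1_def using P1 P2n_pos[of n] P2n_le[of n] ae1 ae2' n
      by (auto simp: g_def less_imp_le)
    have "ER2 N0 R11 R22 R21 P1 u1 (P2n n) u2' = 0"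
      using optall[OF fn] True by simp
    then have "AE z in CN R11 \<Otimes>\<^sub>M CN R22. ennreal (rate N0 (P2n n) (snd z) (u2' (snd z)) P1 R21 (u1 (fst z))) = 0"
      unfolding ER2_def by (subst (asm) nn_integral_0_iff_AE) auto
    moreover have "AE z in CN R11 \<Otimes>\<^sub>M CN R22. snd z \<noteq> 0"
      by (rule AE_snd_CN) (auto intro: CN_nonzero)
    ultimately have "AE z in CN R11 \<Otimes>\<^sub>M CN R22. False"
    proof eventually_elim
      case (elim z)
      define h where "h = snd z"
      have h0: "h \<noteq> 0" using elim by (simp add: h_def)
      have q: "Re (qform R21 (u1 (fst z))) \<ge> 0" using R21 by (rule qform_nonneg)
      have c: "cmod (herm h (u2' h)) = norm h" using cmod_herm_unit[OF h0] by (simp add: u2'_def)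
      have "0 < rate N0 (P2n n) h (u2' h) P1 R21 (u1 (fst z))"
        unfolding rate_def c using h0 P2n_pos[of n] N0 q P1
        by (intro L_pos) (auto intro!: add_pos_nonneg)
      then show False using elim by (simp add: h_def)
    qed
    then have "ER1 N0 R11 R22 R12 P1 u1 P2 u2 = 0"
      unfolding ER1_def by (intro nn_integral_0_iff_AE[THEN iffD2]) (auto elim: AE_mp)
    then show False using gt by simp
  qed
qed

end
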